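(* There is an absolute constant $C$ such that for all $x,u\in\mathbb R$, \[\int_1^\infty|\dot K_t(x,u)|\,dt\le C\,e^{R(x)}.\] Consequently, for every $1\le\rho<\infty$, every $f\in L^1(\gamma_\infty)$ with $\|f\|_{L^1(\gamma_\infty)}=1$ and every $x\in\mathbb R$, $\|H_tf(x)\|_{v(\rho),[1,\infty)}\le C e^{R(x)}$.
   Context: $R(x)=x^2/2$, $d\gamma_\infty(u)=(2\pi)^{-1/2}e^{-R(u)}du$. $K_t(x,u)=\frac{e^{R(x)}}{\sqrt{1-e^{-2t}}}\exp\bigl(-\frac12\frac{(e^{-t}u-x)^2}{1-e^{-2t}}\bigr)$, $\dot K_t=\partial_tK_t$, $H_tf(x)=\int f(u)K_t(x,u)\,d\gamma_\infty(u)$. $\|\phi\|_{v(\rho),I}=\sup(\sum_{i=1}^n|\phi(t_i)-\phi(t_{i-1})|^\rho)^{1/\rho}$ over finite increasing sequences in $I$, taken here in the variable $t$. *)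

theory Defs
  imports "HOL-Analysis.Analysis"
begin

definition R :: "real \<Rightarrow> real" where
  "R x = x\<^sup>2 / 2"

definition gamma_inf :: "real measure" where
  "gamma_inf = density lborel (\<lambda>u. ennreal ((2 * pi) powr (-1/2) * exp (- R u)))"

definition K :: "real \<Rightarrow> real \<Rightarrow> real \<Rightarrow> real" where
  "K t x u = exp (R x) / sqrt (1 - exp (-2*t)) *
     exp (- (1/2) * (exp (-t) * u - x)\<^sup>2 / (1 - exp (-2*t)))"

definition Kdot :: "real \<Rightarrow> real \<Rightarrow> real \<Rightarrow> real" where
  "Kdot t x u = deriv (\<lambda>s. K s x u) t"

definition H :: "real \<Rightarrow> (real \<Rightarrow> real) \<Rightarrow> real \<Rightarrow> real" where
  "H t f x = (\<integral>u. f u * K t x u \<partial>gamma_inf)"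

definition var_norm :: "real \<Rightarrow> real set \<Rightarrow> (real \<Rightarrow> real) \<Rightarrow> ereal" where
  "var_norm \<rho> I \<phi> = (SUP p \<in> {(n, t). (\<forall>i\<le>n. t i \<in> I) \<and> (\<forall>i<n. t i < t (Suc i))}.
      ereal ((\<Sum>i=1..fst p. \<bar>\<phi> (snd p i) - \<phi> (snd p (i - 1))\<bar> powr \<rho>) powr (1 / \<rho>)))"

end

theory Submission
  imports Defs
begin


definition DD :: "real \<Rightarrow> real" where "DD t = 1 - exp (-2*t)"
definition aa :: "real \<Rightarrow> real" where "aa t = 1 / sqrt (DD t)"
definition aa' :: "real \<Rightarrow> real" where "aa' t = - exp (-2*t) / (DD t * sqrt (DD t))"
definition bb :: "real \<Rightarrow> real \<Rightarrow> real \<Rightarrow> real" where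
  "bb x u t = exp (- (1/2) * (exp (-t) * u - x)\<^sup>2 / DD t)"
definition bb' :: "real \<Rightarrow> real \<Rightarrow> real \<Rightarrow> real" where
  "bb' x u t = bb x u t * (exp (-t) / (DD t)\<^sup>2) * ((exp (-t) * u - x) * (u - exp (-t) * x))"

lemma DD_pos: "t > 0 \<Longrightarrow> DD t > 0"
  by (simp add: DD_def)

lemma DD_deriv: "(DD has_real_derivative 2 * exp (-2*t)) (at t)"
  unfolding DD_def by (rule derivative_eq_intros | simp)+

lemma aa_deriv: assumes "t > 0" shows "(aa has_real_derivative aa' t) (at t)"
proof -
  have p: "DD t > 0" using DD_pos assms by simp
  have s: "DERIV (\<lambda>t. sqrt (DD t)) t :> inverse (sqrt (DD t)) / 2 * (2 * exp (-2*t))"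
    by (rule DERIV_chain2[OF DERIV_real_sqrt[OF p] DD_deriv])
  have "DERIV (\<lambda>t. inverse (sqrt (DD t))) t :> - ((inverse (sqrt (DD t)) / 2 * (2 * exp (-2*t))) * inverse (sqrt (DD t) ^ Suc (Suc 0)))"
    by (rule DERIV_inverse_fun[OF s]) (use p in simp)
  moreover have "- ((inverse (sqrt (DD t)) / 2 * (2 * exp (-2*t))) * inverse (sqrt (DD t) ^ Suc (Suc 0))) = aa' t"
    using p unfolding aa'_def by (simp add: field_simps)
  ultimately show ?thesis unfolding aa_def[abs_def] by (simp add: inverse_eq_divide)
qed

lemma bb_deriv: assumes "t > 0" shows "(bb x u has_real_derivative bb' x u t) (at t)"
proof -
  have p: "DD t > 0" using DD_pos assms by simp
  have n: "DERIV (\<lambda>t. - (1/2) * (exp (-t) * u - x)\<^sup>2) t :> - (1/2) * (2 * (exp (-t) * u - x) * (- exp (-t) * u))"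
    by (auto intro!: derivative_eq_intros)
  have q: "DERIV (\<lambda>t. - (1/2) * (exp (-t) * u - x)\<^sup>2 / DD t) t :> 
     ((- (1/2) * (2 * (exp (-t) * u - x) * (- exp (-t) * u))) * DD t - (- (1/2) * (exp (-t) * u - x)\<^sup>2) * (2 * exp (-2*t))) / (DD t * DD t)"
    by (rule DERIV_divide[OF n DD_deriv]) (use p in simp)
  have "DERIV (bb x u) t :> bb x u t * (((- (1/2) * (2 * (exp (-t) * u - x) * (- exp (-t) * u))) * DD t - (- (1/2) * (exp (-t) * u - x)\<^sup>2) * (2 * exp (-2*t))) / (DD t * DD t))"
    unfolding bb_def[abs_def] by (rule DERIV_fun_exp[OF q])
  moreover have "bb x u t * (((- (1/2) * (2 * (exp (-t) * u - x) * (- exp (-t) * u))) * DD t - (- (1/2) * (exp (-t) * u - x)\<^sup>2) * (2 * exp (-2*t))) / (DD t * DD t)) = bb' x u t"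
  proof -
    have e: "exp (-2*t) = exp (-t) * exp (-t)" by (simp flip: exp_add)
    have num: "(- (1/2) * (2 * (exp (-t) * u - x) * (- exp (-t) * u))) * DD t - (- (1/2) * (exp (-t) * u - x)\<^sup>2) * (2 * exp (-2*t))
       = exp (-t) * ((exp (-t) * u - x) * (u - exp (-t) * x))"
      unfolding DD_def e by (simp add: algebra_simps power2_eq_square)
    show ?thesis unfolding num bb'_def by (simp add: power2_eq_square)
  qed
  ultimately show ?thesis by simp
qed

lemma K_eq: "K t x u = exp (R x) * aa t * bb x u t"
  unfolding K_def aa_def bb_def DD_def by simp

lemma K_deriv: assumes "t > 0"
  shows "((\<lambda>s. K s x u) has_real_derivative exp (R x) * (aa' t * bb x u t + aa t * bb' x u t)) (at t)"
proof -
  have "((\<lambda>s. exp (R x) * (aa s * bb x u s)) has_real_derivative exp (R x) * (aa' t * bb x u t + aa t * bb' x u t)) (at t)"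
    by (auto intro!: derivative_eq_intros aa_deriv[OF assms] bb_deriv[OF assms] simp: algebra_simps)
  then show ?thesis by (simp add: K_eq mult.assoc)
qed

lemma Kdot_eq: "t > 0 \<Longrightarrow> Kdot t x u = exp (R x) * (aa' t * bb x u t + aa t * bb' x u t)"
  unfolding Kdot_def by (rule DERIV_imp_deriv[OF K_deriv])

lemma DD_ge: "t \<ge> 1 \<Longrightarrow> DD t \<ge> 1/4"
proof -
  assume t: "t \<ge> 1"
  have "exp (-2*t) \<le> exp (-2)" using t by simp
  also have "exp (-2::real) \<le> 3/4"
  proof -
    have "exp (2::real) \<ge> 1 + 2" using exp_ge_add_one_self[of 2] by simp
    then have "exp (2::real) \<ge> 4/3" by simp
    then show ?thesis by (simp add: exp_minus field_simps)
  qed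
  finally show ?thesis unfolding DD_def by simp
qed

lemma DD_le1: "DD t \<le> 1" unfolding DD_def by simp

lemma aa_bounds: "t \<ge> 1 \<Longrightarrow> 0 \<le> aa t \<and> aa t \<le> 2"
proof -
  assume t: "t \<ge> 1"
  have d: "DD t \<ge> 1/4" using DD_ge[OF t] .
  have "sqrt (DD t) \<ge> sqrt (1/4)" using d by (simp only: real_sqrt_le_iff)
  moreover have "sqrt (1/4::real) = 1/2" by (simp add: real_sqrt_divide)
  ultimately have "sqrt (DD t) \<ge> 1/2" by simp
  moreover have "sqrt (DD t) \<le> 1" using DD_le1[of t] by simp
  ultimately show ?thesis using d unfolding aa_def by (auto simp: divide_le_eq)
qed

lemma aa'_nonpos: "t \<ge> 1 \<Longrightarrow> aa' t \<le> 0"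
proof -
  assume "t \<ge> 1"
  then have "DD t > 0" using DD_ge[of t] by simp
  then show ?thesis unfolding aa'_def by (simp add: divide_nonpos_pos)
qed

lemma bb_bounds: "t \<ge> 1 \<Longrightarrow> 0 < bb x u t \<and> bb x u t \<le> 1"
proof -
  assume "t \<ge> 1"
  then have "DD t > 0" using DD_ge[of t] by simp
  then have "- (1/2) * (exp (-t) * u - x)\<^sup>2 / DD t \<le> 0" by (simp add: divide_nonpos_pos)
  then show ?thesis unfolding bb_def by simp
qed

lemma DD_nz: "t \<ge> 1 \<Longrightarrow> DD t \<noteq> 0" using DD_ge[of t] by auto

lemma cont_DD: "continuous_on S DD" unfolding DD_def by (intro continuous_intros)

lemma cont_aa': "continuous_on {1..} aa'"
  unfolding aa'_def by (auto intro!: continuous_intros cont_DD simp: DD_nz)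

lemma cont_bb': "continuous_on {1..} (bb' x u)"
  unfolding bb'_def bb_def by (auto intro!: continuous_intros cont_DD simp: DD_nz)

lemma cont_aa: "continuous_on {1..} aa"
  unfolding aa_def by (auto intro!: continuous_intros cont_DD simp: DD_nz)

lemma cont_bb: "continuous_on {1..} (bb x u)"
  unfolding bb_def by (auto intro!: continuous_intros cont_DD simp: DD_nz)



definition cs :: "real set \<Rightarrow> (real \<Rightarrow> real) \<Rightarrow> bool" where
  "cs S g \<longleftrightarrow> (\<forall>t\<in>S. g t \<ge> 0) \<or> (\<forall>t\<in>S. g t \<le> 0)"

lemma FTC_has: assumes "c \<le> d" "\<And>t. t \<in> {c..d} \<Longrightarrow> (\<phi> has_real_derivative \<psi> t) (at t)"
  shows "(\<psi> has_integral (\<phi> d - \<phi> c)) {c..d}"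
  apply (rule fundamental_theorem_of_calculus[OF assms(1)])
  using assms(2) by (simp add: has_real_derivative_iff_has_vector_derivative[symmetric] has_field_derivative_at_within)

lemma FTC_cs: assumes "c \<le> d" "\<And>t. t \<in> {c..d} \<Longrightarrow> (\<phi> has_real_derivative \<psi> t) (at t)"
  and "cs {c..d} \<psi>"
  shows "(\<integral>\<^sup>+t. ennreal \<bar>\<psi> t\<bar> * indicator {c..d} t \<partial>lborel) = ennreal \<bar>\<phi> d - \<phi> c\<bar>"
proof -
  have h: "(\<psi> has_integral (\<phi> d - \<phi> c)) {c..d}" by (rule FTC_has[OF assms(1,2)])
  from assms(3) consider "\<forall>t\<in>{c..d}. \<psi> t \<ge> 0" | "\<forall>t\<in>{c..d}. \<psi> t \<le> 0" unfolding cs_def by blast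
  then show ?thesis
  proof cases
    case 1
    have h2: "((\<lambda>t. \<bar>\<psi> t\<bar>) has_integral (\<phi> d - \<phi> c)) {c..d}"
      using h 1 by (subst has_integral_cong[where g=\<psi>]) auto
    have "\<phi> d - \<phi> c \<ge> 0" using has_integral_nonneg[OF h] 1 by auto
    then show ?thesis using nn_integral_has_integral_lebesgue'[OF _ h2] by simp
  next
    case 2
    have h2: "((\<lambda>t. \<bar>\<psi> t\<bar>) has_integral -(\<phi> d - \<phi> c)) {c..d}"
      using has_integral_neg[OF h] 2 by (subst has_integral_cong[where g="\<lambda>t. - \<psi> t"]) auto
    have "-(\<phi> d - \<phi> c) \<ge> 0" using has_integral_nonneg[OF h2] by auto
    then show ?thesis using nn_integral_has_integral_lebesgue'[OF _ h2] by simp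
  qed
qed

lemma FTC_abs: assumes "c \<le> d" "\<And>t. t \<in> {c..d} \<Longrightarrow> (\<phi> has_real_derivative \<psi> t) (at t)"
  and "continuous_on {c..d} \<psi>"
  shows "ennreal \<bar>\<phi> d - \<phi> c\<bar> \<le> (\<integral>\<^sup>+t. ennreal \<bar>\<psi> t\<bar> * indicator {c..d} t \<partial>lborel)"
proof -
  have h: "(\<psi> has_integral (\<phi> d - \<phi> c)) {c..d}" by (rule FTC_has[OF assms(1,2)])
  have ia: "(\<lambda>t. \<bar>\<psi> t\<bar>) integrable_on {c..d}"
    by (rule integrable_continuous_interval) (intro continuous_intros assms(3))
  have "\<bar>\<phi> d - \<phi> c\<bar> = norm (integral {c..d} \<psi>)" using h by (simp add: integral_unique)
  also have "\<dots> \<le> integral {c..d} (\<lambda>t. \<bar>\<psi> t\<bar>)"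
    by (rule integral_norm_bound_integral) (use h ia in auto)
  finally have le: "\<bar>\<phi> d - \<phi> c\<bar> \<le> integral {c..d} (\<lambda>t. \<bar>\<psi> t\<bar>)" .
  have "(\<integral>\<^sup>+t. ennreal \<bar>\<psi> t\<bar> * indicator {c..d} t \<partial>lborel) = ennreal (integral {c..d} (\<lambda>t. \<bar>\<psi> t\<bar>))"
    by (rule nn_integral_has_integral_lebesgue') (use ia in auto)
  then show ?thesis using le by (simp add: ennreal_leI)
qed

lemma MC_lemma:
  fixes g :: "real \<Rightarrow> ennreal"
  assumes meas: "g \<in> borel_measurable borel"
  and bd: "\<And>T. T \<ge> c \<Longrightarrow> (\<integral>\<^sup>+t. g t * indicator {c..T} t \<partial>lborel) \<le> M"
  shows "(\<integral>\<^sup>+t. g t * indicator {c..} t \<partial>lborel) \<le> M"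
proof -
  define F where "F n t = g t * indicator {c..c + real n} t" for n t
  have inc: "incseq F"
    unfolding incseq_def F_def le_fun_def
    by (auto intro!: mult_left_mono split: split_indicator)
  have pt: "(SUP n. F n t) = g t * indicator {c..} t" for t
  proof (cases "t \<ge> c")
    case True
    have "F (nat \<lceil>t - c\<rceil>) t = g t"
      unfolding F_def using True by (auto split: split_indicator) linarith
    then have "g t \<le> (SUP n. F n t)" by (metis UNIV_I SUP_upper)
    moreover have "(SUP n. F n t) \<le> g t"
      by (rule SUP_least) (auto simp: F_def split: split_indicator)
    ultimately show ?thesis using True by (auto intro: antisym)
  next
    case False
    then show ?thesis by (simp add: F_def)
  qed
  have mF: "F n \<in> borel_measurable lborel" for n
    unfolding F_def using meas by (auto intro!: borel_measurable_times)
  have "(\<integral>\<^sup>+t. g t * indicator {c..} t \<partial>lborel) = (\<integral>\<^sup>+t. (SUP n. F n t) \<partial>lborel)"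
    by (simp add: pt)
  also have "\<dots> = (SUP n. integral\<^sup>N lborel (F n))"
    by (rule nn_integral_monotone_convergence_SUP[OF inc mF])
  also have "\<dots> \<le> M"
    by (rule SUP_least) (unfold F_def, rule bd, simp)
  finally show ?thesis .
qed



lemma cs_mono: "cs S g \<Longrightarrow> T \<subseteq> S \<Longrightarrow> cs T g"
  unfolding cs_def by blast

lemma cs_mult: "cs S f \<Longrightarrow> cs S g \<Longrightarrow> cs S (\<lambda>t. f t * g t)"
  unfolding cs_def by (auto intro: mult_nonneg_nonneg mult_nonpos_nonpos mult_nonneg_nonpos mult_nonpos_nonneg)

lemma cs_weight: "(\<And>t. t \<in> S \<Longrightarrow> w t \<ge> 0) \<Longrightarrow> cs S g \<Longrightarrow> cs S (\<lambda>t. w t * g t)"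
  by (rule cs_mult) (auto simp: cs_def)

lemma split_lin: "\<exists>m. cs {..m} (\<lambda>t. \<alpha> * exp (-t) + \<beta>) \<and> cs {m..} (\<lambda>t. \<alpha> * exp (-t) + \<beta>)"
proof (cases "\<alpha> = 0")
  case True
  then show ?thesis unfolding cs_def by (cases "\<beta> \<ge> 0") auto
next
  case a: False
  have g: "\<alpha> * exp (-t) + \<beta> = \<alpha> * (exp (-t) - (-\<beta>/\<alpha>))" for t
    using a by (simp add: field_simps)
  show ?thesis
  proof (cases "-\<beta>/\<alpha> > 0")
    case r: True
    define m where "m = - ln (-\<beta>/\<alpha>)"
    have em: "exp (-m) = -\<beta>/\<alpha>" unfolding m_def using r by simp
    have le: "t \<le> m \<Longrightarrow> exp (-t) - (-\<beta>/\<alpha>) \<ge> 0" for t using em by (metis diff_ge_0_iff_ge exp_le_cancel_iff neg_le_iff_le)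
    have ge: "t \<ge> m \<Longrightarrow> exp (-t) - (-\<beta>/\<alpha>) \<le> 0" for t using em by (metis diff_le_0_iff_le exp_le_cancel_iff neg_le_iff_le)
    show ?thesis
    proof (cases "\<alpha> > 0")
      case True
      then show ?thesis unfolding cs_def g using le ge
        by (intro exI[of _ m]) (auto intro: mult_nonneg_nonneg mult_nonneg_nonpos)
    next
      case False
      then have "\<alpha> \<le> 0" by simp
      then show ?thesis unfolding cs_def g using le ge
        by (intro exI[of _ m]) (auto intro: mult_nonpos_nonneg mult_nonpos_nonpos)
    qed
  next
    case False
    then have p: "exp (-t) - (-\<beta>/\<alpha>) \<ge> 0" for t
      by (smt (verit) exp_gt_zero)
    show ?thesis
    proof (cases "\<alpha> > 0")
      case True
      then show ?thesis unfolding cs_def g using p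
        by (intro exI[of _ 0]) (auto intro: mult_nonneg_nonneg)
    next
      case False
      then have "\<alpha> \<le> 0" by simp
      then show ?thesis unfolding cs_def g using p
        by (intro exI[of _ 0]) (auto intro: mult_nonpos_nonneg)
    qed
  qed
qed

lemma bb'_struct: "\<exists>m1 m2. m1 \<le> m2 \<and> cs {..m1} (bb' x u) \<and> cs {m1..m2} (bb' x u) \<and> cs {m2..} (bb' x u)"
proof -
  obtain mA where A: "cs {..mA} (\<lambda>t. u * exp (-t) + (-x))" "cs {mA..} (\<lambda>t. u * exp (-t) + (-x))"
    using split_lin by blast
  obtain mB where B: "cs {..mB} (\<lambda>t. (-x) * exp (-t) + u)" "cs {mB..} (\<lambda>t. (-x) * exp (-t) + u)"
    using split_lin by blast
  have w: "bb x u t * (exp (-t) / (DD t)\<^sup>2) \<ge> 0" for t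
    unfolding bb_def by simp
  have eq: "bb' x u = (\<lambda>t. (bb x u t * (exp (-t) / (DD t)\<^sup>2)) * ((u * exp (-t) + (-x)) * ((-x) * exp (-t) + u)))"
    unfolding bb'_def by (auto simp: algebra_simps)
  have P: "cs S (\<lambda>t. u * exp (-t) + (-x)) \<Longrightarrow> cs S (\<lambda>t. (-x) * exp (-t) + u) \<Longrightarrow> cs S (bb' x u)" for S
    unfolding eq by (intro cs_weight w cs_mult)
  show ?thesis
  proof (cases "mA \<le> mB")
    case True
    show ?thesis
      by (rule exI[of _ mA], rule exI[of _ mB])
         (use True in \<open>auto intro!: P intro: cs_mono[OF A(1)] cs_mono[OF A(2)] cs_mono[OF B(1)] cs_mono[OF B(2)]\<close>)
  next
    case False
    show ?thesis
      by (rule exI[of _ mB], rule exI[of _ mA])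
         (use False in \<open>auto intro!: P intro: cs_mono[OF A(1)] cs_mono[OF A(2)] cs_mono[OF B(1)] cs_mono[OF B(2)]\<close>)
  qed
qed



lemma meas1: "continuous_on {1..} h \<Longrightarrow> (\<lambda>t. ennreal \<bar>h t\<bar> * indicator {(1::real)..} t) \<in> borel_measurable borel"
proof -
  assume c: "continuous_on {1..} h"
  have "(\<lambda>t. indicator {(1::real)..} t *\<^sub>R \<bar>h t\<bar>) \<in> borel_measurable borel"
    by (rule borel_measurable_continuous_on_indicator) (auto intro!: continuous_intros c)
  then have "(\<lambda>t. ennreal (indicator {(1::real)..} t *\<^sub>R \<bar>h t\<bar>)) \<in> borel_measurable borel"
    by (rule measurable_compose[OF _ measurable_ennreal])
  moreover have "(\<lambda>t. ennreal (indicator {(1::real)..} t *\<^sub>R \<bar>h t\<bar>)) = (\<lambda>t. ennreal \<bar>h t\<bar> * indicator {(1::real)..} t)"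
    by (auto split: split_indicator)
  ultimately show ?thesis by metis
qed

lemma MC1: assumes "continuous_on {1..} h"
  and "\<And>T. T \<ge> 1 \<Longrightarrow> (\<integral>\<^sup>+t. ennreal \<bar>h t\<bar> * indicator {1..T} t \<partial>lborel) \<le> M"
  shows "(\<integral>\<^sup>+t. ennreal \<bar>h t\<bar> * indicator {(1::real)..} t \<partial>lborel) \<le> M"
proof -
  have "(\<integral>\<^sup>+t. (ennreal \<bar>h t\<bar> * indicator {(1::real)..} t) * indicator {1..} t \<partial>lborel) \<le> M"
  proof (rule MC_lemma[OF meas1[OF assms(1)]])
    fix T :: real assume "T \<ge> 1"
    have "(\<lambda>t. (ennreal \<bar>h t\<bar> * indicator {(1::real)..} t) * indicator {1..T} t) = (\<lambda>t. ennreal \<bar>h t\<bar> * indicator {1..T} t)"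
      by (auto split: split_indicator)
    then show "(\<integral>\<^sup>+t. (ennreal \<bar>h t\<bar> * indicator {(1::real)..} t) * indicator {1..T} t \<partial>lborel) \<le> M"
      using assms(2)[OF \<open>T \<ge> 1\<close>] by simp
  qed
  moreover have "(\<lambda>t. (ennreal \<bar>h t\<bar> * indicator {(1::real)..} t) * indicator {1..} t) = (\<lambda>t. ennreal \<bar>h t\<bar> * indicator {1..} t)"
    by (auto split: split_indicator)
  ultimately show ?thesis by simp
qed

lemma aa_int: "(\<integral>\<^sup>+t. ennreal \<bar>aa' t\<bar> * indicator {(1::real)..} t \<partial>lborel) \<le> 2"
proof (rule MC1[OF cont_aa'])
  fix T :: real assume T: "T \<ge> 1"
  have "(\<integral>\<^sup>+t. ennreal \<bar>aa' t\<bar> * indicator {1..T} t \<partial>lborel) = ennreal \<bar>aa T - aa 1\<bar>"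
    by (rule FTC_cs[OF T]) (use aa_deriv aa'_nonpos in \<open>auto simp: cs_def\<close>)
  also have "\<dots> \<le> ennreal 2" using aa_bounds[of T] aa_bounds[of 1] T
    by (intro ennreal_leI) auto
  finally show "(\<integral>\<^sup>+t. ennreal \<bar>aa' t\<bar> * indicator {1..T} t \<partial>lborel) \<le> 2" by simp
qed

lemma bb_piece: assumes "1 \<le> lo" "cs {lo..hi} (bb' x u)"
  shows "(\<integral>\<^sup>+t. ennreal \<bar>bb' x u t\<bar> * indicator {lo..hi} t \<partial>lborel) \<le> 1"
proof (cases "lo \<le> hi")
  case True
  have "(\<integral>\<^sup>+t. ennreal \<bar>bb' x u t\<bar> * indicator {lo..hi} t \<partial>lborel) = ennreal \<bar>bb x u hi - bb x u lo\<bar>"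
    by (rule FTC_cs[OF True _ assms(2)]) (use bb_deriv assms(1) in auto)
  also have "\<dots> \<le> ennreal 1" using bb_bounds[of hi x u] bb_bounds[of lo x u] assms(1) True
    by (intro ennreal_leI) auto
  finally show ?thesis by simp
next
  case False
  then have "(\<lambda>t. ennreal \<bar>bb' x u t\<bar> * indicator {lo..hi} t) = (\<lambda>t. 0)" by auto
  then show ?thesis by simp
qed

lemma bb_int: "(\<integral>\<^sup>+t. ennreal \<bar>bb' x u t\<bar> * indicator {(1::real)..} t \<partial>lborel) \<le> 3"
proof (rule MC1[OF cont_bb'])
  fix T :: real assume T: "T \<ge> 1"
  obtain m1 m2 where m: "m1 \<le> m2" "cs {..m1} (bb' x u)" "cs {m1..m2} (bb' x u)" "cs {m2..} (bb' x u)"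
    using bb'_struct by blast
  let ?g = "\<lambda>t. ennreal \<bar>bb' x u t\<bar>"
  have mg: "?g \<in> borel_measurable lborel"
    by (intro measurable_compose[OF _ measurable_ennreal] borel_measurable_abs) (simp add: bb'_def bb_def DD_def)
  have pt: "?g t * indicator {1..T} t \<le> ?g t * indicator {1..min T m1} t + (?g t * indicator {max 1 m1..min T m2} t + ?g t * indicator {max 1 m2..T} t)" for t
    using m(1) by (auto split: split_indicator)
  have "(\<integral>\<^sup>+t. ?g t * indicator {1..T} t \<partial>lborel) \<le> (\<integral>\<^sup>+t. ?g t * indicator {1..min T m1} t + (?g t * indicator {max 1 m1..min T m2} t + ?g t * indicator {max 1 m2..T} t) \<partial>lborel)"
    by (rule nn_integral_mono) (rule pt)
  also have "\<dots> = (\<integral>\<^sup>+t. ?g t * indicator {1..min T m1} t \<partial>lborel) + ((\<integral>\<^sup>+t. ?g t * indicator {max 1 m1..min T m2} t \<partial>lborel) + (\<integral>\<^sup>+t. ?g t * indicator {max 1 m2..T} t \<partial>lborel))"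
    using mg by (simp add: nn_integral_add)
  also have "\<dots> \<le> 1 + (1 + 1)"
    by (intro add_mono bb_piece cs_mono[OF m(2)] cs_mono[OF m(3)] cs_mono[OF m(4)]) auto
  finally show "(\<integral>\<^sup>+t. ?g t * indicator {1..T} t \<partial>lborel) \<le> 3" by simp
qed



lemma Kdot_bound: assumes "t \<ge> 1"
  shows "\<bar>Kdot t x u\<bar> \<le> exp (R x) * (\<bar>aa' t\<bar> + 2 * \<bar>bb' x u t\<bar>)"
proof -
  have a: "0 \<le> aa t" "aa t \<le> 2" using aa_bounds[OF assms] by auto
  have b: "0 < bb x u t" "bb x u t \<le> 1" using bb_bounds[OF assms] by auto
  have "\<bar>aa' t * bb x u t + aa t * bb' x u t\<bar> \<le> \<bar>aa' t\<bar> * bb x u t + aa t * \<bar>bb' x u t\<bar>"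
    using a b by (simp add: abs_mult abs_triangle_ineq[THEN order_trans])
  also have "\<dots> \<le> \<bar>aa' t\<bar> * 1 + 2 * \<bar>bb' x u t\<bar>"
    using a b by (intro add_mono mult_mono) auto
  finally have "\<bar>aa' t * bb x u t + aa t * bb' x u t\<bar> \<le> \<bar>aa' t\<bar> + 2 * \<bar>bb' x u t\<bar>" by simp
  then show ?thesis using assms by (simp add: Kdot_eq abs_mult)
qed

lemma part1: "(\<integral>\<^sup>+ t. ennreal \<bar>Kdot t x u\<bar> * indicator {1..} t \<partial>lborel) \<le> ennreal (8 * exp (R x))"
proof -
  let ?A = "\<lambda>t. ennreal \<bar>aa' t\<bar> * indicator {(1::real)..} t"
  let ?B = "\<lambda>t. ennreal \<bar>bb' x u t\<bar> * indicator {(1::real)..} t"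
  have mA: "?A \<in> borel_measurable lborel" using meas1[OF cont_aa'] by simp
  have mB: "?B \<in> borel_measurable lborel" using meas1[OF cont_bb'] by simp
  have pt: "ennreal \<bar>Kdot t x u\<bar> * indicator {1..} t \<le> ennreal (exp (R x)) * (?A t + 2 * ?B t)" for t
  proof (cases "t \<ge> 1")
    case True
    have "ennreal \<bar>Kdot t x u\<bar> \<le> ennreal (exp (R x) * (\<bar>aa' t\<bar> + 2 * \<bar>bb' x u t\<bar>))"
      by (rule ennreal_leI[OF Kdot_bound[OF True]])
    also have "\<dots> = ennreal (exp (R x)) * (ennreal \<bar>aa' t\<bar> + 2 * ennreal \<bar>bb' x u t\<bar>)"
      by (simp add: ennreal_mult ennreal_plus)
    finally show ?thesis using True by simp
  qed simp
  have "(\<integral>\<^sup>+ t. ennreal \<bar>Kdot t x u\<bar> * indicator {1..} t \<partial>lborel) \<le> (\<integral>\<^sup>+ t. ennreal (exp (R x)) * (?A t + 2 * ?B t) \<partial>lborel)"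
    by (rule nn_integral_mono) (rule pt)
  also have "\<dots> = ennreal (exp (R x)) * ((\<integral>\<^sup>+ t. ?A t \<partial>lborel) + 2 * (\<integral>\<^sup>+ t. ?B t \<partial>lborel))"
    using mA mB by (simp add: nn_integral_cmult nn_integral_add)
  also have "\<dots> \<le> ennreal (exp (R x)) * (2 + 2 * 3)"
    by (intro mult_left_mono add_mono aa_int bb_int) auto
  also have "\<dots> = ennreal (8 * exp (R x))"
    by (simp add: ennreal_mult mult.commute)
  finally show ?thesis .
qed

lemma Kdot_deriv: "t \<ge> 1 \<Longrightarrow> ((\<lambda>s. K s x u) has_real_derivative Kdot t x u) (at t)"
  using K_deriv[of t x u] Kdot_eq[of t x u] by simp

lemma Kdot_cont: "continuous_on {1..} (\<lambda>t. Kdot t x u)"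
proof -
  have "continuous_on {1..} (\<lambda>t. exp (R x) * (aa' t * bb x u t + aa t * bb' x u t))"
    by (intro continuous_intros cont_aa' cont_bb' cont_aa cont_bb)
  then show ?thesis by (rule continuous_on_cong[THEN iffD1, rotated 2]) (auto simp: Kdot_eq)
qed

lemma incr_le: "(\<forall>i<n. (t::nat\<Rightarrow>real) i < t (Suc i)) \<Longrightarrow> m \<le> n \<Longrightarrow> t 0 \<le> t m"
proof (induction m)
  case (Suc m)
  then show ?case by (metis Suc_le_lessD less_imp_le_nat order.strict_implies_order order_trans)
qed simp

lemma closed_halfopen:
  fixes c d :: real
  shows
  "(\<integral>\<^sup>+s. g s * indicator {c..d} s \<partial>lborel) = (\<integral>\<^sup>+s. g s * indicator {c..<d} s \<partial>lborel)"
proof (rule nn_integral_cong_AE)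
  show "AE s in lborel. g s * indicator {c..d} s = g s * indicator {c..<d} s"
    using AE_lborel_singleton[of d]
  proof eventually_elim
    fix s :: real assume "s \<noteq> d"
    then show "g s * indicator {c..d} s = g s * indicator {c..<d} s"
      by (cases "s < d") (auto simp: indicator_def)
  qed
qed

lemma tele:
  assumes der: "\<And>s. s \<ge> 1 \<Longrightarrow> (\<phi> has_real_derivative \<psi> s) (at s)"
  and cont: "continuous_on {1..} \<psi>"
  and t1: "\<forall>i\<le>n. t i \<ge> 1" and inc: "\<forall>i<n. t i < t (Suc i)"
  shows "ennreal (\<Sum>i=1..n. \<bar>\<phi> (t i) - \<phi> (t (i-1))\<bar>) \<le> (\<integral>\<^sup>+s. ennreal \<bar>\<psi> s\<bar> * indicator {t 0..<t n} s \<partial>lborel)"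
  using t1 inc
proof (induction n)
  case 0
  then show ?case by simp
next
  case (Suc n)
  let ?g = "\<lambda>s. ennreal \<bar>\<psi> s\<bar>"
  have IH: "ennreal (\<Sum>i=1..n. \<bar>\<phi> (t i) - \<phi> (t (i-1))\<bar>) \<le> (\<integral>\<^sup>+s. ?g s * indicator {t 0..<t n} s \<partial>lborel)"
    using Suc by auto
  have a: "t 0 \<le> t n" using incr_le[of "Suc n" t n] Suc.prems by auto
  have b: "t n < t (Suc n)" using Suc.prems by auto
  have tn: "t n \<ge> 1" using Suc.prems by auto
  have step: "ennreal \<bar>\<phi> (t (Suc n)) - \<phi> (t n)\<bar> \<le> (\<integral>\<^sup>+s. ?g s * indicator {t n..<t (Suc n)} s \<partial>lborel)"
  proof -
    have "ennreal \<bar>\<phi> (t (Suc n)) - \<phi> (t n)\<bar> \<le> (\<integral>\<^sup>+s. ?g s * indicator {t n..t (Suc n)} s \<partial>lborel)"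
      by (rule FTC_abs) (use b tn der in \<open>auto intro: continuous_on_subset[OF cont]\<close>)
    then show ?thesis by (simp add: closed_halfopen)
  qed
  have mg: "(\<lambda>s. ?g s * indicator S s) \<in> borel_measurable borel" if "S \<subseteq> {1..}" "S \<in> sets borel" for S
  proof -
    have "(\<lambda>s. (?g s * indicator {1..} s) * indicator S s) \<in> borel_measurable borel"
      using meas1[OF cont] that by simp
    moreover have "(\<lambda>s. (?g s * indicator {1..} s) * indicator S s) = (\<lambda>s. ?g s * indicator S s)"
      using that by (intro ext) (auto simp: indicator_def)
    ultimately show ?thesis by simp
  qed
  have "ennreal (\<Sum>i=1..Suc n. \<bar>\<phi> (t i) - \<phi> (t (i-1))\<bar>) = ennreal (\<Sum>i=1..n. \<bar>\<phi> (t i) - \<phi> (t (i-1))\<bar>) + ennreal \<bar>\<phi> (t (Suc n)) - \<phi> (t n)\<bar>"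
    by (simp add: ennreal_plus sum_nonneg)
  also have "\<dots> \<le> (\<integral>\<^sup>+s. ?g s * indicator {t 0..<t n} s \<partial>lborel) + (\<integral>\<^sup>+s. ?g s * indicator {t n..<t (Suc n)} s \<partial>lborel)"
    by (rule add_mono[OF IH step])
  also have "\<dots> = (\<integral>\<^sup>+s. ?g s * indicator {t 0..<t n} s + ?g s * indicator {t n..<t (Suc n)} s \<partial>lborel)"
  proof (rule nn_integral_add[symmetric])
    have "t 0 \<ge> 1" using Suc.prems by auto
    then have "{t 0..<t n} \<subseteq> {1..}" by (intro subsetI) auto
    then show "(\<lambda>s. ?g s * indicator {t 0..<t n} s) \<in> borel_measurable lborel"
      using mg[of "{t 0..<t n}"] by simp
    have "{t n..<t (Suc n)} \<subseteq> {1..}" using tn by (intro subsetI) auto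
    then show "(\<lambda>s. ?g s * indicator {t n..<t (Suc n)} s) \<in> borel_measurable lborel"
      using mg[of "{t n..<t (Suc n)}"] by simp
  qed
  also have "\<dots> = (\<integral>\<^sup>+s. ?g s * indicator {t 0..<t (Suc n)} s \<partial>lborel)"
    by (rule nn_integral_cong) (use a b in \<open>auto split: split_indicator\<close>)
  finally show ?case .
qed

lemma Kvar: assumes t1: "\<forall>i\<le>n. t i \<ge> 1" and inc: "\<forall>i<n. t i < t (Suc i)"
  shows "(\<Sum>i=1..n. \<bar>K (t i) x u - K (t (i-1)) x u\<bar>) \<le> 8 * exp (R x)"
proof -
  have "ennreal (\<Sum>i=1..n. \<bar>K (t i) x u - K (t (i-1)) x u\<bar>) \<le> (\<integral>\<^sup>+s. ennreal \<bar>Kdot s x u\<bar> * indicator {t 0..<t n} s \<partial>lborel)"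
    by (rule tele[where \<phi>="\<lambda>s. K s x u", OF Kdot_deriv Kdot_cont t1 inc])
  also have "\<dots> \<le> (\<integral>\<^sup>+s. ennreal \<bar>Kdot s x u\<bar> * indicator {1..} s \<partial>lborel)"
    using t1 by (intro nn_integral_mono) (auto split: split_indicator)
  also have "\<dots> \<le> ennreal (8 * exp (R x))" by (rule part1)
  finally show ?thesis by (simp add: ennreal_le_iff)
qed



lemma powr_sum_le:
  fixes a :: "nat \<Rightarrow> real"
  assumes fin: "finite I" and nn: "\<And>i. i \<in> I \<Longrightarrow> a i \<ge> 0" and r: "\<rho> \<ge> 1"
  shows "(\<Sum>i\<in>I. a i powr \<rho>) powr (1/\<rho>) \<le> (\<Sum>i\<in>I. a i)"
proof -
  define S where "S = (\<Sum>i\<in>I. a i)"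
  have S0: "S \<ge> 0" unfolding S_def using nn by (simp add: sum_nonneg)
  show ?thesis
  proof (cases "S = 0")
    case True
    then have "\<forall>i\<in>I. a i = 0" using sum_nonneg_eq_0_iff[OF fin] nn unfolding S_def by blast
    then show ?thesis using True by (simp add: S_def)
  next
    case False
    then have Sp: "S > 0" using S0 by simp
    have le: "a i powr \<rho> \<le> a i * S powr (\<rho> - 1)" if i: "i \<in> I" for i
    proof (cases "a i = 0")
      case True then show ?thesis by simp
    next
      case False
      then have ap: "a i > 0" using nn[OF i] by simp
      have aS: "a i \<le> S" unfolding S_def using fin nn i by (intro member_le_sum) auto
      have "a i powr \<rho> = a i powr (1 + (\<rho> - 1))" by simp
      also have "\<dots> = a i powr 1 * a i powr (\<rho> - 1)" by (rule powr_add)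
      also have "\<dots> \<le> a i * S powr (\<rho> - 1)" using ap aS r by (auto intro!: mult_left_mono powr_mono2)
      finally show ?thesis .
    qed
    have "(\<Sum>i\<in>I. a i powr \<rho>) \<le> (\<Sum>i\<in>I. a i * S powr (\<rho> - 1))" by (rule sum_mono) (rule le)
    also have "\<dots> = S * S powr (\<rho> - 1)" unfolding S_def by (simp add: sum_distrib_right)
    also have "\<dots> = S powr 1 * S powr (\<rho> - 1)" using Sp by simp
    also have "\<dots> = S powr (1 + (\<rho> - 1))" by (rule powr_add[symmetric])
    also have "\<dots> = S powr \<rho>" by simp
    finally have "(\<Sum>i\<in>I. a i powr \<rho>) \<le> S powr \<rho>" .
    then have "(\<Sum>i\<in>I. a i powr \<rho>) powr (1/\<rho>) \<le> (S powr \<rho>) powr (1/\<rho>)"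
      using r by (intro powr_mono2) (auto intro: sum_nonneg)
    also have "\<dots> = S" using r Sp by (simp add: powr_powr)
    finally show ?thesis by (simp add: S_def)
  qed
qed

lemma K_borel: "(\<lambda>u. K s x u) \<in> borel_measurable borel"
  unfolding K_def by measurable

lemma K_meas: "(\<lambda>u. K s x u) \<in> borel_measurable gamma_inf"
  using K_borel unfolding gamma_inf_def by simp

lemma K_le: "s \<ge> 1 \<Longrightarrow> 0 \<le> K s x u \<and> K s x u \<le> 2 * exp (R x)"
proof -
  assume s: "s \<ge> 1"
  have a: "0 \<le> aa s" "aa s \<le> 2" using aa_bounds[OF s] by auto
  have b: "0 \<le> bb x u s" "bb x u s \<le> 1" using bb_bounds[OF s, of x u] by auto
  have e: "exp (R x) > 0" by simp
  have "aa s * bb x u s \<le> 2 * 1" using a b by (intro mult_mono) auto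
  then have "exp (R x) * (aa s * bb x u s) \<le> exp (R x) * 2" using e by (intro mult_left_mono) auto
  moreover have "0 \<le> exp (R x) * (aa s * bb x u s)" using a b e by simp
  ultimately show ?thesis unfolding K_eq by (simp add: mult.assoc mult.commute mult.left_commute)
qed

lemma int_fK: assumes f: "integrable gamma_inf f" and s: "s \<ge> 1"
  shows "integrable gamma_inf (\<lambda>u. f u * K s x u)"
proof (rule Bochner_Integration.integrable_bound)
  show "integrable gamma_inf (\<lambda>u. (2 * exp (R x)) * \<bar>f u\<bar>)"
    using f by (intro integrable_mult_right integrable_abs)
  show "(\<lambda>u. f u * K s x u) \<in> borel_measurable gamma_inf"
    using f K_meas by (intro borel_measurable_times) (auto dest: borel_measurable_integrable)
  show "AE u in gamma_inf. norm (f u * K s x u) \<le> norm (2 * exp (R x) * \<bar>f u\<bar>)"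
  proof (rule AE_I2)
    fix u
    have k: "0 \<le> K s x u" "K s x u \<le> 2 * exp (R x)" using K_le[OF s, of x u] by auto
    have "\<bar>f u\<bar> * K s x u \<le> \<bar>f u\<bar> * (2 * exp (R x))" using k by (intro mult_left_mono) auto
    then show "norm (f u * K s x u) \<le> norm (2 * exp (R x) * \<bar>f u\<bar>)"
      using k by (simp add: abs_mult mult.commute)
  qed
qed

lemma Hdiff: assumes f: "integrable gamma_inf f" and a: "a \<ge> 1" and b: "b \<ge> 1"
  shows "\<bar>H a f x - H b f x\<bar> \<le> (\<integral>u. \<bar>f u\<bar> * \<bar>K a x u - K b x u\<bar> \<partial>gamma_inf)"
    and "integrable gamma_inf (\<lambda>u. \<bar>f u\<bar> * \<bar>K a x u - K b x u\<bar>)"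
proof -
  have ia: "integrable gamma_inf (\<lambda>u. f u * K a x u)" by (rule int_fK[OF f a])
  have ib: "integrable gamma_inf (\<lambda>u. f u * K b x u)" by (rule int_fK[OF f b])
  have eq: "(\<lambda>u. \<bar>f u * K a x u - f u * K b x u\<bar>) = (\<lambda>u. \<bar>f u\<bar> * \<bar>K a x u - K b x u\<bar>)"
    by (auto simp: abs_mult right_diff_distrib[symmetric])
  have "integrable gamma_inf (\<lambda>u. \<bar>f u * K a x u - f u * K b x u\<bar>)"
    by (intro integrable_abs Bochner_Integration.integrable_diff ia ib)
  then show "integrable gamma_inf (\<lambda>u. \<bar>f u\<bar> * \<bar>K a x u - K b x u\<bar>)" by (simp only: eq)
  have "H a f x - H b f x = (\<integral>u. f u * K a x u - f u * K b x u \<partial>gamma_inf)"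
    unfolding H_def by (rule Bochner_Integration.integral_diff[OF ia ib, symmetric])
  also have "\<bar>\<dots>\<bar> \<le> (\<integral>u. norm (f u * K a x u - f u * K b x u) \<partial>gamma_inf)"
    using integral_norm_bound[of gamma_inf "\<lambda>u. f u * K a x u - f u * K b x u"] by simp
  also have "\<dots> = (\<integral>u. \<bar>f u\<bar> * \<bar>K a x u - K b x u\<bar> \<partial>gamma_inf)"
    by (simp only: real_norm_def eq)
  finally show "\<bar>H a f x - H b f x\<bar> \<le> (\<integral>u. \<bar>f u\<bar> * \<bar>K a x u - K b x u\<bar> \<partial>gamma_inf)" .
qed

lemma Hvar: assumes f: "integrable gamma_inf f" and f1: "(\<integral>u. \<bar>f u\<bar> \<partial>gamma_inf) = 1"
  and t1: "\<forall>i\<le>n. t i \<ge> 1" and inc: "\<forall>i<n. t i < t (Suc i)"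
  shows "(\<Sum>i=1..n. \<bar>H (t i) f x - H (t (i-1)) f x\<bar>) \<le> 8 * exp (R x)"
proof -
  let ?D = "\<lambda>i u. \<bar>f u\<bar> * \<bar>K (t i) x u - K (t (i-1)) x u\<bar>"
  have ti: "i \<in> {1..n} \<Longrightarrow> t i \<ge> 1 \<and> t (i-1) \<ge> 1" for i using t1 by auto
  have iD: "i \<in> {1..n} \<Longrightarrow> integrable gamma_inf (?D i)" for i
    using Hdiff(2)[OF f, of "t i" "t (i-1)"] ti by auto
  have "(\<Sum>i=1..n. \<bar>H (t i) f x - H (t (i-1)) f x\<bar>) \<le> (\<Sum>i=1..n. (\<integral>u. ?D i u \<partial>gamma_inf))"
    by (rule sum_mono) (use Hdiff(1)[OF f] ti in auto)
  also have "\<dots> = (\<integral>u. (\<Sum>i=1..n. ?D i u) \<partial>gamma_inf)"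
    by (rule Bochner_Integration.integral_sum[symmetric]) (use iD in auto)
  also have "\<dots> \<le> (\<integral>u. \<bar>f u\<bar> * (8 * exp (R x)) \<partial>gamma_inf)"
  proof (rule integral_mono)
    show "integrable gamma_inf (\<lambda>u. \<Sum>i=1..n. ?D i u)" by (rule Bochner_Integration.integrable_sum) (use iD in auto)
    show "integrable gamma_inf (\<lambda>u. \<bar>f u\<bar> * (8 * exp (R x)))"
      using f by (intro integrable_mult_left integrable_abs)
    fix u
    have "(\<Sum>i=1..n. ?D i u) = \<bar>f u\<bar> * (\<Sum>i=1..n. \<bar>K (t i) x u - K (t (i-1)) x u\<bar>)"
      by (simp add: sum_distrib_left)
    also have "\<dots> \<le> \<bar>f u\<bar> * (8 * exp (R x))"
      by (intro mult_left_mono Kvar t1 inc) auto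
    finally show "(\<Sum>i=1..n. ?D i u) \<le> \<bar>f u\<bar> * (8 * exp (R x))" .
  qed
  also have "\<dots> = 8 * exp (R x)" using f1 by simp
  finally show ?thesis .
qed

theorem mainTheorem5:
  shows "\<exists>C::real.
    (\<forall>x u. (\<integral>\<^sup>+ t. ennreal \<bar>Kdot t x u\<bar> * indicator {1..} t \<partial>lborel)
              \<le> ennreal (C * exp (R x))) \<and>
    (\<forall>\<rho> f x. 1 \<le> \<rho> \<longrightarrow> integrable gamma_inf f \<longrightarrow> (\<integral>u. \<bar>f u\<bar> \<partial>gamma_inf) = 1 \<longrightarrow>
        var_norm \<rho> {1..} (\<lambda>t. H t f x) \<le> ereal (C * exp (R x)))"
proof (intro exI[of _ 8] conjI allI impI)
  fix x u show "(\<integral>\<^sup>+ t. ennreal \<bar>Kdot t x u\<bar> * indicator {1..} t \<partial>lborel) \<le> ennreal (8 * exp (R x))"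
    by (rule part1)
next
  fix \<rho> :: real and f :: "real \<Rightarrow> real" and x :: real
  assume r: "1 \<le> \<rho>" and f: "integrable gamma_inf f" and f1: "(\<integral>u. \<bar>f u\<bar> \<partial>gamma_inf) = 1"
  show "var_norm \<rho> {1..} (\<lambda>t. H t f x) \<le> ereal (8 * exp (R x))"
    unfolding var_norm_def
  proof (rule SUP_least)
    fix p assume "p \<in> {(n, t). (\<forall>i\<le>n. t i \<in> {1::real..}) \<and> (\<forall>i<n. t i < t (Suc i))}"
    then obtain n t where p: "p = (n, t)" and t1: "\<forall>i\<le>n. t i \<ge> 1" and inc: "\<forall>i<n. t i < t (Suc i)"
      by auto
    have "(\<Sum>i=1..n. \<bar>H (t i) f x - H (t (i-1)) f x\<bar> powr \<rho>) powr (1/\<rho>) \<le> (\<Sum>i=1..n. \<bar>H (t i) f x - H (t (i-1)) f x\<bar>)"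
      by (rule powr_sum_le) (use r in auto)
    also have "\<dots> \<le> 8 * exp (R x)" by (rule Hvar[OF f f1 t1 inc])
    finally show "ereal ((\<Sum>i=1..fst p. \<bar>H (snd p i) f x - H (snd p (i - 1)) f x\<bar> powr \<rho>) powr (1 / \<rho>)) \<le> ereal (8 * exp (R x))"
      by (simp add: p)
  qed
qed

end
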